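(* Let $d\ge1$ and let $T$ be a $d\times d$ column-stochastic matrix. For each row $i$ choose a permutation $\sigma_i$ of $\{1,\dots,d\}$ such that $T_{i\sigma_i(1)}\ge T_{i\sigma_i(2)}\ge\dots\ge T_{i\sigma_i(d)}$, and for $n=1,\dots,d$ define $K_n=\sum_{i=1}^d\sqrt{T_{i\sigma_i(n)}}\,|i\rangle\langle\sigma_i(n)|$. Then $\Phi(\rho)=\sum_{n=1}^dK_n\rho K_n^\dagger$ is a quantum channel whose classical action is $T$, and the nonzero part of the spectrum of its Jamio{\l}kowski state is given by $$\boldsymbol{\lambda}(J_\Phi)=\frac1d\sum_{i=1}^d\mathbf{r}^{(i)},\qquad \mathbf{r}^{(i)}=(T_{i1},\dots,T_{id})^\downarrow,$$ (padded with zeros to length $d^2$). In particular, every $T$ is the classical action of a channel whose Jamio{\l}kowski state has rank at most $d$ (i.e., with at most $d$ Kraus operators).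
   Context: Fix an orthonormal basis $\{|i\rangle\}_{i=1}^d$ of $\mathbb{C}^d$, $|\Omega\rangle=\sum_i|ii\rangle$. The Jamio{\l}kowski state of a channel $\Phi$ is $J_\Phi=\frac1d(\Phi\otimes\mathcal{I})(|\Omega\rangle\langle\Omega|)$. The classical action of $\Phi$ is the matrix $T$ with $T_{ij}=\langle i|\Phi(|j\rangle\langle j|)|i\rangle$. A column-stochastic matrix satisfies $T_{ij}\ge0$ and $\sum_iT_{ij}=1$ for all $j$. $\boldsymbol{\lambda}(X)$ denotes eigenvalues in non-increasing order and $x^\downarrow$ the non-increasing rearrangement of a vector $x$. *)

theory Defs
  imports "Jordan_Normal_Form.Jordan_Normal_Form" "Jordan_Normal_Form.Schur_Decomposition"
    "Jordan_Normal_Form.DL_Rank"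
begin

(* Indices are 0-based: the basis |i>, i = 0..d-1.  Matrices are complex d x d matrices
   (Jordan_Normal_Form 'mat').  A map on d x d matrices is a function complex mat => complex mat;
   only its behaviour on carrier_mat d d matters. *)

definition mtrace :: "complex mat \<Rightarrow> complex" where
  "mtrace A = (\<Sum>i<dim_row A. A $$ (i,i))"

definition psd :: "nat \<Rightarrow> complex mat \<Rightarrow> bool" where
  "psd n A \<longleftrightarrow> A \<in> carrier_mat n n \<and> A = mat_adjoint A \<and>
     (\<forall>v \<in> carrier_vec n. Im (conjugate v \<bullet> (A *\<^sub>v v)) = 0 \<and> Re (conjugate v \<bullet> (A *\<^sub>v v)) \<ge> 0)"

(* (Phi \<otimes> id_k) acting on (C^d \<otimes> C^k); basis |i>|a> has index i*k + a *)
definition ext_id :: "(complex mat \<Rightarrow> complex mat) \<Rightarrow> nat \<Rightarrow> nat \<Rightarrow> complex mat \<Rightarrow> complex mat" where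
  "ext_id \<Phi> d k X = mat (d*k) (d*k) (\<lambda>(r,c).
      \<Phi> (mat d d (\<lambda>(i,j). X $$ (i*k + r mod k, j*k + c mod k))) $$ (r div k, c div k))"

definition is_channel :: "nat \<Rightarrow> (complex mat \<Rightarrow> complex mat) \<Rightarrow> bool" where
  "is_channel d \<Phi> \<longleftrightarrow>
     (\<forall>A \<in> carrier_mat d d. \<Phi> A \<in> carrier_mat d d) \<and>
     (\<forall>A \<in> carrier_mat d d. \<forall>B \<in> carrier_mat d d. \<Phi> (A + B) = \<Phi> A + \<Phi> B) \<and>
     (\<forall>A \<in> carrier_mat d d. \<forall>c. \<Phi> (c \<cdot>\<^sub>m A) = c \<cdot>\<^sub>m \<Phi> A) \<and>
     (\<forall>A \<in> carrier_mat d d. mtrace (\<Phi> A) = mtrace A) \<and>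
     (\<forall>k X. psd (d*k) X \<longrightarrow> psd (d*k) (ext_id \<Phi> d k X))"

definition ketbra :: "nat \<Rightarrow> nat \<Rightarrow> nat \<Rightarrow> complex mat" where
  "ketbra d a b = mat d d (\<lambda>(i,j). if i = a \<and> j = b then 1 else 0)"

(* |Omega><Omega| on C^d \<otimes> C^d, |Omega> = sum_i |ii>, index of |i>|j> is i*d+j *)
definition omega_proj :: "nat \<Rightarrow> complex mat" where
  "omega_proj d = mat (d*d) (d*d) (\<lambda>(r,c). if r div d = r mod d \<and> c div d = c mod d then 1 else 0)"

definition jamiolkowski :: "nat \<Rightarrow> (complex mat \<Rightarrow> complex mat) \<Rightarrow> complex mat" where
  "jamiolkowski d \<Phi> = (1 / of_nat d) \<cdot>\<^sub>m ext_id \<Phi> d d (omega_proj d)"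

definition classical_action :: "nat \<Rightarrow> (complex mat \<Rightarrow> complex mat) \<Rightarrow> nat \<Rightarrow> nat \<Rightarrow> complex" where
  "classical_action d \<Phi> i j = \<Phi> (ketbra d j j) $$ (i, i)"

definition column_stochastic :: "nat \<Rightarrow> (nat \<Rightarrow> nat \<Rightarrow> real) \<Rightarrow> bool" where
  "column_stochastic d T \<longleftrightarrow> (\<forall>i<d. \<forall>j<d. T i j \<ge> 0) \<and> (\<forall>j<d. (\<Sum>i<d. T i j) = 1)"

definition row_desc :: "nat \<Rightarrow> (nat \<Rightarrow> nat \<Rightarrow> real) \<Rightarrow> nat \<Rightarrow> real list" where
  "row_desc d T i = rev (sort (map (T i) [0..<d]))"

definition kraus_op :: "nat \<Rightarrow> (nat \<Rightarrow> nat \<Rightarrow> real) \<Rightarrow> (nat \<Rightarrow> nat \<Rightarrow> nat) \<Rightarrow> nat \<Rightarrow> complex mat" where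
  "kraus_op d T \<sigma> n = mat d d (\<lambda>(i,j). if j = \<sigma> i n then complex_of_real (sqrt (T i (\<sigma> i n))) else 0)"

definition kraus_channel :: "nat \<Rightarrow> (nat \<Rightarrow> complex mat) \<Rightarrow> complex mat \<Rightarrow> complex mat" where
  "kraus_channel d K \<rho> = mat d d (\<lambda>(i,j). \<Sum>n<d. (K n * \<rho> * mat_adjoint (K n)) $$ (i,j))"

end

theory Submission
  imports Defs
begin


lemma adj_dims[simp]: "dim_row (mat_adjoint A) = dim_col A" "dim_col (mat_adjoint A) = dim_row A"
  unfolding mat_adjoint_def by auto

lemma adj_carrier: "A \<in> carrier_mat n m \<Longrightarrow> mat_adjoint A \<in> carrier_mat m n"
  unfolding carrier_mat_def by simp

lemma adj_index[simp]: "i < dim_col A \<Longrightarrow> j < dim_row A \<Longrightarrow> mat_adjoint A $$ (i,j) = conjugate (A $$ (j,i))"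
  unfolding mat_adjoint_def by (simp add: mat_of_rows_index)

lemma mult_entry:
  assumes "A \<in> carrier_mat n m" "B \<in> carrier_mat m p" "i < n" "j < p"
  shows "(A * B) $$ (i,j) = (\<Sum>k<m. A $$ (i,k) * B $$ (k,j))"
  using assms by (simp add: scalar_prod_def lessThan_atLeast0)

lemma sel_mult:
  fixes W X :: "complex mat"
  assumes W: "W \<in> carrier_mat N N" and X: "X \<in> carrier_mat N N"
    and Wi: "\<And>r c. r < N \<Longrightarrow> c < N \<Longrightarrow> W $$ (r,c) = (if c = g r then w r else 0)"
    and g: "\<And>r. r < N \<Longrightarrow> g r < N"
    and r: "r < N" and c: "c < N"
  shows "(W * X * mat_adjoint W) $$ (r,c) = w r * X $$ (g r, g c) * conjugate (w c)"
proof -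
  have 1: "(W * X) $$ (r,j) = w r * X $$ (g r, j)" if j: "j < N" for j
  proof -
    have "(W * X) $$ (r,j) = (\<Sum>i<N. W $$ (r,i) * X $$ (i,j))"
      by (rule mult_entry[OF W X r j])
    also have "\<dots> = (\<Sum>i<N. if i = g r then w r * X $$ (i,j) else 0)"
      by (rule sum.cong, auto simp: Wi r)
    also have "\<dots> = w r * X $$ (g r, j)" using g[OF r] by simp
    finally show ?thesis .
  qed
  have "(W * X * mat_adjoint W) $$ (r,c) = (\<Sum>j<N. (W * X) $$ (r,j) * mat_adjoint W $$ (j,c))"
    by (rule mult_entry[OF mult_carrier_mat[OF W X] adj_carrier[OF W] r c])
  also have "\<dots> = (\<Sum>j<N. if j = g c then w r * X $$ (g r, j) * conjugate (w c) else 0)"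
    by (rule sum.cong, insert W c, auto simp: 1 Wi)
  also have "\<dots> = w r * X $$ (g r, g c) * conjugate (w c)" using g[OF c] by simp
  finally show ?thesis .
qed

lemma divmod_eq:
  fixes a p a' p' k :: nat
  assumes h: "p < k" "p' < k" "a*k+p = a'*k+p'" shows "a = a' \<and> p = p'"
proof -
  have e1: "a = (a*k+p) div k" using h(1) by simp
  have e2: "a' = (a'*k+p') div k" using h(2) by simp
  have e3: "p = (a*k+p) mod k" using h(1) by simp
  have e4: "p' = (a'*k+p') mod k" using h(2) by simp
  show ?thesis using e1 e2 e3 e4 h(3) by metis
qed

lemma sum_sq_split:
  fixes f :: "nat \<Rightarrow> 'a::comm_monoid_add"
  shows "(\<Sum>r<d*k. f r) = (\<Sum>a<d. \<Sum>p<k. f (a*k+p))"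
proof -
  have inj: "inj_on (\<lambda>(a,p). a*k+p) ({..<d} \<times> {..<k})"
  proof (rule inj_onI)
    fix x y assume x: "x \<in> {..<d} \<times> {..<k}" and y: "y \<in> {..<d} \<times> {..<k}"
      and e: "(\<lambda>(a,p). a*k+p) x = (\<lambda>(a,p). a*k+p) y"
    obtain a p where xa: "x = (a,p)" by (cases x)
    obtain a' p' where ya: "y = (a',p')" by (cases y)
    have "p < k" "p' < k" "a*k+p = a'*k+p'" using x y e xa ya by auto
    from divmod_eq[OF this] show "x = y" using xa ya by simp
  qed
  have img: "(\<lambda>(a,p). a*k+p) ` ({..<d} \<times> {..<k}) = {..<d*k}"
  proof
    show "(\<lambda>(a,p). a*k+p) ` ({..<d} \<times> {..<k}) \<subseteq> {..<d*k}"
    proof clarsimp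
      fix a p assume "a < d" "p < k"
      hence "a*k+p < a*k + k" by simp
      also have "\<dots> = (Suc a)*k" by simp
      also have "\<dots> \<le> d*k" using \<open>a<d\<close> by (intro mult_le_mono1) simp
      finally show "a*k+p < d*k" .
    qed
    show "{..<d*k} \<subseteq> (\<lambda>(a,p). a*k+p) ` ({..<d} \<times> {..<k})"
    proof
      fix r assume r: "r \<in> {..<d*k}"
      hence k: "k > 0" by (cases k) auto
      have "r div k < d" using r by (simp add: less_mult_imp_div_less)
      moreover have "r mod k < k" using k by simp
      ultimately show "r \<in> (\<lambda>(a,p). a*k+p) ` ({..<d} \<times> {..<k})"
        by (intro image_eqI[of _ _ "(r div k, r mod k)"]) auto
    qed
  qed
  have "(\<Sum>r<d*k. f r) = (\<Sum>x\<in>{..<d} \<times> {..<k}. f ((\<lambda>(a,p). a*k+p) x))"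
    by (subst img[symmetric], subst sum.reindex[OF inj], simp)
  also have "\<dots> = (\<Sum>a<d. \<Sum>p<k. f (a*k+p))"
    by (simp add: sum.cartesian_product split_def)
  finally show ?thesis .
qed




lemma mv_entry:
  assumes "A \<in> carrier_mat n m" "v \<in> carrier_vec m" "i < n"
  shows "(A *\<^sub>v v) $ i = (\<Sum>k<m. A $$ (i,k) * v $ k)"
  using assms by (simp add: scalar_prod_def lessThan_atLeast0)

lemma sp_entry:
  assumes "w \<in> carrier_vec n" "u \<in> carrier_vec n"
  shows "u \<bullet> w = (\<Sum>i<n. u $ i * w $ i)"
  using assms by (simp add: scalar_prod_def lessThan_atLeast0)

lemma adj_adj: "(A :: complex mat) \<in> carrier_mat n m \<Longrightarrow> mat_adjoint (mat_adjoint A) = A"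
  by (rule eq_matI, auto)

lemma adj_add: "(A :: complex mat) \<in> carrier_mat n m \<Longrightarrow> B \<in> carrier_mat n m \<Longrightarrow>
   mat_adjoint (A + B) = mat_adjoint A + mat_adjoint B"
  by (rule eq_matI, auto)

lemma adj_mult:
  fixes A B :: "complex mat"
  assumes A: "A \<in> carrier_mat n m" and B: "B \<in> carrier_mat m p"
  shows "mat_adjoint (A * B) = mat_adjoint B * mat_adjoint A"
proof (rule eq_matI)
  fix i j assume i: "i < dim_row (mat_adjoint B * mat_adjoint A)" and j: "j < dim_col (mat_adjoint B * mat_adjoint A)"
  have i': "i < p" and j': "j < n" using i j A B by auto
  have "mat_adjoint (A * B) $$ (i,j) = cnj ((A*B) $$ (j,i))" using i' j' A B by simp
  also have "\<dots> = cnj (\<Sum>k<m. A $$ (j,k) * B $$ (k,i))" by (simp add: mult_entry[OF A B j' i'])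
  also have "\<dots> = (\<Sum>k<m. mat_adjoint B $$ (i,k) * mat_adjoint A $$ (k,j))"
    unfolding cnj_sum using A B i' j' by (intro sum.cong) auto
  also have "\<dots> = (mat_adjoint B * mat_adjoint A) $$ (i,j)"
    by (rule mult_entry[symmetric, OF adj_carrier[OF B] adj_carrier[OF A] i' j'])
  finally show "mat_adjoint (A * B) $$ (i,j) = (mat_adjoint B * mat_adjoint A) $$ (i,j)" .
qed (insert A B, auto)

lemma quad_move:
  fixes W :: "complex mat"
  assumes W: "W \<in> carrier_mat n n" and v: "v \<in> carrier_vec n" and y: "y \<in> carrier_vec n"
  shows "conjugate v \<bullet> (W *\<^sub>v y) = conjugate (mat_adjoint W *\<^sub>v v) \<bullet> y"
proof -
  have c1: "W *\<^sub>v y \<in> carrier_vec n" using W y by auto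
  have c2: "conjugate (mat_adjoint W *\<^sub>v v) \<in> carrier_vec n" using W v adj_carrier[OF W] by auto
  have "conjugate v \<bullet> (W *\<^sub>v y) = (\<Sum>i<n. cnj (v $ i) * (\<Sum>k<n. W $$ (i,k) * y $ k))"
    using v W y mv_entry[OF W y] by (subst sp_entry[OF c1], auto intro!: sum.cong simp del: index_mult_mat_vec)
  also have "\<dots> = (\<Sum>i<n. \<Sum>k<n. cnj (v $ i) * W $$ (i,k) * y $ k)"
    by (simp add: sum_distrib_left mult.assoc)
  also have "\<dots> = (\<Sum>k<n. \<Sum>i<n. cnj (v $ i) * W $$ (i,k) * y $ k)"
    by (rule sum.swap)
  also have "\<dots> = (\<Sum>k<n. cnj (\<Sum>i<n. mat_adjoint W $$ (k,i) * v $ i) * y $ k)"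
    using W by (auto intro!: sum.cong simp: cnj_sum sum_distrib_right sum_distrib_left mult.commute mult.left_commute)
  also have "\<dots> = conjugate (mat_adjoint W *\<^sub>v v) \<bullet> y"
    using W v y adj_carrier[OF W] mv_entry[OF adj_carrier[OF W] v] by (subst sp_entry[OF y c2], auto intro!: sum.cong simp del: index_mult_mat_vec)
  finally show ?thesis .
qed

lemma psd_zero: "psd n (0\<^sub>m n n)"
proof -
  have z: "v \<in> carrier_vec n \<Longrightarrow> 0\<^sub>m n n *\<^sub>v v = 0\<^sub>v n" for v :: "complex vec" by (rule eq_vecI) (auto simp: scalar_prod_def)
  have a: "mat_adjoint (0\<^sub>m n n :: complex mat) = 0\<^sub>m n n" by (rule eq_matI) auto
  show ?thesis unfolding psd_def a by (auto simp: z scalar_prod_def)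
qed

lemma psd_add: assumes A: "psd n A" and B: "psd n B" shows "psd n (A + B)"
proof -
  have cA: "A \<in> carrier_mat n n" and hA: "A = mat_adjoint A" using A unfolding psd_def by auto
  have cB: "B \<in> carrier_mat n n" and hB: "B = mat_adjoint B" using B unfolding psd_def by auto
  have h: "A + B = mat_adjoint (A + B)" using adj_add[OF cA cB] hA hB by simp
  have q: "conjugate v \<bullet> ((A + B) *\<^sub>v v) = conjugate v \<bullet> (A *\<^sub>v v) + conjugate v \<bullet> (B *\<^sub>v v)"
    if v: "v \<in> carrier_vec n" for v
    using cA cB v by (simp add: add_mult_distrib_mat_vec scalar_prod_add_distrib[of _ n])
  show ?thesis using A B cA cB h q unfolding psd_def by auto
qed

lemma psd_congr:
  fixes W X :: "complex mat"
  assumes X: "psd n X" and W: "W \<in> carrier_mat n n"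
  shows "psd n (W * X * mat_adjoint W)"
proof -
  have cX: "X \<in> carrier_mat n n" and hX: "X = mat_adjoint X" using X unfolding psd_def by auto
  have cA: "W * X * mat_adjoint W \<in> carrier_mat n n" using cX W adj_carrier[OF W] by auto
  have h: "mat_adjoint (W * X * mat_adjoint W) = W * X * mat_adjoint W"
    using adj_mult[OF mult_carrier_mat[OF W cX] adj_carrier[OF W]] adj_mult[OF W cX] adj_adj[OF W] hX
      W cX adj_carrier[OF W]
    by (simp add: assoc_mult_mat[of _ n n _ n _ n])
  have q: "conjugate v \<bullet> ((W * X * mat_adjoint W) *\<^sub>v v) = conjugate u \<bullet> (X *\<^sub>v u)"
    and u: "u \<in> carrier_vec n"
    if v: "v \<in> carrier_vec n" and ud: "u = mat_adjoint W *\<^sub>v v" for v u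
  proof -
    show u: "u \<in> carrier_vec n" using ud W v adj_carrier[OF W] by auto
    have "(W * X * mat_adjoint W) *\<^sub>v v = W *\<^sub>v (X *\<^sub>v u)"
      using W cX v adj_carrier[OF W] ud
      by (simp add: assoc_mult_mat_vec[of _ n n _ n])
    then show "conjugate v \<bullet> ((W * X * mat_adjoint W) *\<^sub>v v) = conjugate u \<bullet> (X *\<^sub>v u)"
      using quad_move[OF W v, of "X *\<^sub>v u"] cX u ud by auto
  qed
  show ?thesis unfolding psd_def
  proof (intro conjI ballI)
    fix v :: "complex vec" assume v: "v \<in> carrier_vec n"
    define u where "u = mat_adjoint W *\<^sub>v v"
    have "u \<in> carrier_vec n" using u[OF v u_def] .
    then show "Im (conjugate v \<bullet> (W * X * mat_adjoint W *\<^sub>v v)) = 0"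
       "0 \<le> Re (conjugate v \<bullet> (W * X * mat_adjoint W *\<^sub>v v))"
      using q[OF v u_def] X unfolding psd_def by auto
  qed (insert cA h, auto)
qed

definition msum :: "nat \<Rightarrow> (nat \<Rightarrow> complex mat) \<Rightarrow> nat \<Rightarrow> complex mat" where
  "msum N F m = mat N N (\<lambda>(r,c). \<Sum>n<m. F n $$ (r,c))"

lemma msum_0: "msum N F 0 = 0\<^sub>m N N"
  unfolding msum_def by (rule eq_matI, auto)

lemma msum_Suc: "F m \<in> carrier_mat N N \<Longrightarrow> msum N F (Suc m) = msum N F m + F m"
  unfolding msum_def by (rule eq_matI, auto)

lemma msum_induct:
  assumes "P (0\<^sub>m N N)" "\<And>A n. n < m \<Longrightarrow> P A \<Longrightarrow> A \<in> carrier_mat N N \<Longrightarrow> P (A + F n)"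
    "\<And>n. n < m \<Longrightarrow> F n \<in> carrier_mat N N"
  shows "P (msum N F m)"
  using assms
proof (induction m)
  case 0 then show ?case by (simp add: msum_0)
next
  case (Suc m)
  have "P (msum N F m)" using Suc by auto
  moreover have "msum N F m \<in> carrier_mat N N" unfolding msum_def by simp
  ultimately show ?case using Suc msum_Suc[of F m N] by auto
qed




lemma monom_x: "monom (1::'a::comm_ring_1) n = [:0,1:] ^ n"
  by (simp add: monom_altdef)

lemma sylvester:
  fixes A B :: "complex mat"
  assumes A: "A \<in> carrier_mat m n" and B: "B \<in> carrier_mat n m"
  shows "monom 1 n * char_poly (A * B) = monom 1 m * char_poly (B * A)"
proof -
  define L :: "complex mat \<Rightarrow> complex poly mat" where "L = map_mat (\<lambda>a. [:a:])"
  define X :: "complex poly" where "X = [:0,1:]"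
  let ?PA = "L A" and ?PB = "L B"
  have PA: "?PA \<in> carrier_mat m n" and PB: "?PB \<in> carrier_mat n m" using A B by (auto simp: L_def)
  have mPA: "- ?PA \<in> carrier_mat m n" and mPB: "- ?PB \<in> carrier_mat n m" using PA PB by auto
  have XIm: "X \<cdot>\<^sub>m 1\<^sub>m m \<in> carrier_mat m m" and XIn: "X \<cdot>\<^sub>m 1\<^sub>m n \<in> carrier_mat n n" by auto
  have cpAB: "char_poly_matrix (A * B) = X \<cdot>\<^sub>m 1\<^sub>m m + - (?PA * ?PB)"
  proof -
    have "L (A * B) = ?PA * ?PB" unfolding L_def by (rule map_poly_mult[OF A B])
    moreover have "map_mat (\<lambda>a. [: - a :]) (A * B) = - L (A * B)"
      unfolding L_def by (rule eq_matI, auto)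
    ultimately show ?thesis unfolding char_poly_matrix_def X_def using A B by simp
  qed
  have cpBA: "char_poly_matrix (B * A) = X \<cdot>\<^sub>m 1\<^sub>m n + - (?PB * ?PA)"
  proof -
    have "L (B * A) = ?PB * ?PA" unfolding L_def by (rule map_poly_mult[OF B A])
    moreover have "map_mat (\<lambda>a. [: - a :]) (B * A) = - L (B * A)"
      unfolding L_def by (rule eq_matI, auto)
    ultimately show ?thesis unfolding char_poly_matrix_def X_def using A B by simp
  qed
  have e2: "- (?PB * ?PA) + X \<cdot>\<^sub>m 1\<^sub>m n = char_poly_matrix (B * A)"
    unfolding cpBA by (rule comm_add_mat[of _ n n], insert PA PB, auto)
  define M where "M = four_block_mat (X \<cdot>\<^sub>m 1\<^sub>m m) ?PA ?PB (1\<^sub>m n)"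
  define L1 where "L1 = four_block_mat (1\<^sub>m m) (- ?PA) (0\<^sub>m n m) (1\<^sub>m n)"
  define L2 where "L2 = four_block_mat (1\<^sub>m m) (0\<^sub>m m n) (- ?PB) (X \<cdot>\<^sub>m 1\<^sub>m n)"
  have cM: "M \<in> carrier_mat (m+n) (m+n)" unfolding M_def by auto
  have cL1: "L1 \<in> carrier_mat (m+n) (m+n)" unfolding L1_def by auto
  have cL2: "L2 \<in> carrier_mat (m+n) (m+n)" unfolding L2_def by auto
  have dL1: "det L1 = 1" unfolding L1_def
    by (subst det_four_block_mat_lower_left_zero[of _ m _ n], insert PA, auto)
  have dL2: "det L2 = X ^ n" unfolding L2_def
    by (subst det_four_block_mat_upper_right_zero[of _ m _ n], insert PB, auto)
  have L1M: "L1 * M = four_block_mat (char_poly_matrix (A * B)) (0\<^sub>m m n) ?PB (1\<^sub>m n)"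
    unfolding L1_def M_def
    apply (subst mult_four_block_mat[OF one_carrier_mat mPA zero_carrier_mat one_carrier_mat XIm PA PB one_carrier_mat])
    apply (rule cong_four_block_mat)
    using PA PB cpAB apply simp
    using PA PB apply (intro eq_matI, auto)[1]
    using PA PB apply simp
    using PA PB apply simp
    done
  have L2M: "L2 * M = four_block_mat (X \<cdot>\<^sub>m 1\<^sub>m m) ?PA (0\<^sub>m n m) (char_poly_matrix (B * A))"
    unfolding L2_def M_def
    apply (subst mult_four_block_mat[OF one_carrier_mat zero_carrier_mat mPB XIn XIm PA PB one_carrier_mat])
    apply (rule cong_four_block_mat)
    using PA PB apply simp
    using PA PB apply simp
    using PA PB apply (simp add: mult_smult_distrib[OF PB] mult_smult_assoc_mat[OF _ PB])
     apply (intro eq_matI, auto)[1]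
    using PA PB e2 apply simp
    done
  have "det (L1 * M) = det M" using det_mult[OF cL1 cM] dL1 by simp
  moreover have "det (L1 * M) = char_poly (A * B)" unfolding L1M char_poly_def
    using A B PB by (subst det_four_block_mat_upper_right_zero[of _ m _ n], auto)
  ultimately have dM: "det M = char_poly (A * B)" by simp
  have "det (L2 * M) = X ^ n * char_poly (A * B)" using det_mult[OF cL2 cM] dL2 dM by simp
  moreover have "det (L2 * M) = X ^ m * char_poly (B * A)" unfolding L2M char_poly_def
    using A B PA by (subst det_four_block_mat_lower_left_zero[of _ m _ n], auto)
  ultimately show ?thesis unfolding monom_x X_def by simp
qed




lemma idx_lt: "a < d \<Longrightarrow> p < (k::nat) \<Longrightarrow> a*k+p < d*k"
proof -
  assume "a < d" "p < k"
  hence "a*k+p < a*k + k" by simp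
  also have "\<dots> = (Suc a)*k" by simp
  also have "\<dots> \<le> d*k" using \<open>a<d\<close> by (intro mult_le_mono1) simp
  finally show ?thesis .
qed

lemma prod_list_upt: "prod_list (map f [0..<d]) = (\<Prod>n<d. f n)"
  by (induction d) (auto simp: lessThan_Suc mult.commute)

locale KS =
  fixes d :: nat and T :: "nat \<Rightarrow> nat \<Rightarrow> real" and \<sigma> :: "nat \<Rightarrow> nat \<Rightarrow> nat"
  assumes d1: "d \<ge> 1" and cs: "column_stochastic d T" and perm: "\<forall>i<d. \<sigma> i permutes {..<d}"
begin

definition sK :: "nat \<Rightarrow> nat \<Rightarrow> complex" where
  "sK a n = complex_of_real (sqrt (T a (\<sigma> a n)))"

lemma sig_lt: "a < d \<Longrightarrow> n < d \<Longrightarrow> \<sigma> a n < d"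
  using perm permutes_in_image[of "\<sigma> a" "{..<d}" n] by auto

lemma sig_inj: "a < d \<Longrightarrow> \<sigma> a n = \<sigma> a m \<longleftrightarrow> n = m"
  using perm permutes_inj[of "\<sigma> a" "{..<d}"] by (auto dest: injD)

lemma Tnn: "a < d \<Longrightarrow> j < d \<Longrightarrow> T a j \<ge> 0"
  using cs unfolding column_stochastic_def by auto

lemma colsum: "j < d \<Longrightarrow> (\<Sum>i<d. T i j) = 1"
  using cs unfolding column_stochastic_def by auto

lemma sK_sq: "a < d \<Longrightarrow> n < d \<Longrightarrow> sK a n * cnj (sK a n) = complex_of_real (T a (\<sigma> a n))"
proof -
  assume a: "a < d" and n: "n < d"
  have "T a (\<sigma> a n) \<ge> 0" using Tnn[OF a sig_lt[OF a n]] .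
  then have "sqrt (T a (\<sigma> a n)) * sqrt (T a (\<sigma> a n)) = T a (\<sigma> a n)" by simp
  then show ?thesis unfolding sK_def by (metis complex_cnj_complex_of_real of_real_mult)
qed

lemma sK_real: "cnj (sK a n) = sK a n"
  unfolding sK_def by simp

lemma reidx: "a < d \<Longrightarrow> (\<Sum>n<d. f (\<sigma> a n)) = (\<Sum>j<d. f j)"
  using sum.permute[of "\<sigma> a" "{..<d}" f] perm by (simp add: comp_def)

lemma K_carrier: "kraus_op d T \<sigma> n \<in> carrier_mat d d"
  unfolding kraus_op_def by simp

lemma K_entry: "a < d \<Longrightarrow> j < d \<Longrightarrow> kraus_op d T \<sigma> n $$ (a,j) = (if j = \<sigma> a n then sK a n else 0)"
  unfolding kraus_op_def sK_def by simp

lemma phi_entry: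
  assumes rho: "\<rho> \<in> carrier_mat d d" and a: "a < d" and b: "b < d"
  shows "kraus_channel d (kraus_op d T \<sigma>) \<rho> $$ (a,b) = (\<Sum>n<d. sK a n * \<rho> $$ (\<sigma> a n, \<sigma> b n) * cnj (sK b n))"
  unfolding kraus_channel_def using a b
  by (auto intro!: sum.cong simp: sel_mult[OF K_carrier rho K_entry sig_lt])

lemma phi_carrier: "kraus_channel d K \<rho> \<in> carrier_mat d d"
  unfolding kraus_channel_def by simp

end



context KS begin

abbreviation "\<Phi> \<equiv> kraus_channel d (kraus_op d T \<sigma>)"

lemma phi_dims[simp]: "dim_row (kraus_channel d K \<rho>) = d" "dim_col (kraus_channel d K \<rho>) = d"
  unfolding kraus_channel_def by simp_all

lemma phi_entry2:
  assumes rho: "\<rho> \<in> carrier_mat d d" and a: "a < d" and b: "b < d"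
  shows "\<Phi> \<rho> $$ (a,b) = (\<Sum>n<d. sK a n * cnj (sK b n) * \<rho> $$ (\<sigma> a n, \<sigma> b n))"
  unfolding phi_entry[OF rho a b] by (simp add: ac_simps)

lemma phi_add: "A \<in> carrier_mat d d \<Longrightarrow> B \<in> carrier_mat d d \<Longrightarrow> \<Phi> (A + B) = \<Phi> A + \<Phi> B"
  by (rule eq_matI) (auto simp: phi_entry2 sig_lt sum.distrib distrib_left)

lemma phi_smult: "A \<in> carrier_mat d d \<Longrightarrow> \<Phi> (c \<cdot>\<^sub>m A) = c \<cdot>\<^sub>m \<Phi> A"
  by (rule eq_matI) (auto simp: phi_entry2 sig_lt sum_distrib_left ac_simps)

lemma phi_trace: assumes A: "A \<in> carrier_mat d d" shows "mtrace (\<Phi> A) = mtrace A"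
proof -
  have "mtrace (\<Phi> A) = (\<Sum>a<d. \<Phi> A $$ (a,a))"
    unfolding mtrace_def using phi_carrier[of "kraus_op d T \<sigma>" A] by simp
  also have "\<dots> = (\<Sum>a<d. \<Sum>n<d. complex_of_real (T a (\<sigma> a n)) * A $$ (\<sigma> a n, \<sigma> a n))"
    by (rule sum.cong, simp, subst phi_entry2[OF A], auto intro!: sum.cong simp: sK_sq)
  also have "\<dots> = (\<Sum>a<d. \<Sum>j<d. complex_of_real (T a j) * A $$ (j, j))"
    by (rule sum.cong, simp, rule reidx[of _ "\<lambda>j. complex_of_real (T _ j) * A $$ (j, j)"], simp)
  also have "\<dots> = (\<Sum>j<d. (\<Sum>a<d. complex_of_real (T a j)) * A $$ (j, j))"
    by (subst sum.swap, simp add: sum_distrib_right)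
  also have "\<dots> = (\<Sum>j<d. A $$ (j, j))"
    by (rule sum.cong, simp, simp add: colsum flip: of_real_sum)
  also have "\<dots> = mtrace A" unfolding mtrace_def using A by simp
  finally show ?thesis .
qed

lemma classical: assumes i: "i < d" and j: "j < d"
  shows "classical_action d \<Phi> i j = complex_of_real (T i j)"
proof -
  have kb: "ketbra d j j \<in> carrier_mat d d" unfolding ketbra_def by simp
  have "classical_action d \<Phi> i j = (\<Sum>n<d. complex_of_real (T i (\<sigma> i n)) * ketbra d j j $$ (\<sigma> i n, \<sigma> i n))"
    unfolding classical_action_def by (subst phi_entry2[OF kb i i], auto intro!: sum.cong simp: sK_sq i)
  also have "\<dots> = (\<Sum>j'<d. complex_of_real (T i j') * ketbra d j j $$ (j', j'))"
    by (rule reidx[OF i])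
  also have "\<dots> = (\<Sum>j'<d. if j' = j then complex_of_real (T i j) else 0)"
    by (rule sum.cong, auto simp: ketbra_def)
  also have "\<dots> = complex_of_real (T i j)" using j by simp
  finally show ?thesis .
qed

definition Wk :: "nat \<Rightarrow> nat \<Rightarrow> complex mat" where
  "Wk k n = mat (d*k) (d*k) (\<lambda>(r,c). if c = \<sigma> (r div k) n * k + r mod k then sK (r div k) n else 0)"

lemma ext_msum:
  assumes X: "X \<in> carrier_mat (d*k) (d*k)"
  shows "ext_id \<Phi> d k X = msum (d*k) (\<lambda>n. Wk k n * X * mat_adjoint (Wk k n)) d"
proof (rule eq_matI)
  fix r c assume r: "r < dim_row (msum (d*k) (\<lambda>n. Wk k n * X * mat_adjoint (Wk k n)) d)"
    and c: "c < dim_col (msum (d*k) (\<lambda>n. Wk k n * X * mat_adjoint (Wk k n)) d)"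
  have r: "r < d*k" and c: "c < d*k" using r c unfolding msum_def by auto
  have k: "k > 0" using r by (cases k) auto
  have a: "r div k < d" and b: "c div k < d" using r c by (auto simp: less_mult_imp_div_less)
  have p: "r mod k < k" and q: "c mod k < k" using k by auto
  define Y where "Y = mat d d (\<lambda>(i,j). X $$ (i*k + r mod k, j*k + c mod k))"
  have Y: "Y \<in> carrier_mat d d" unfolding Y_def by simp
  have "ext_id \<Phi> d k X $$ (r,c) = \<Phi> Y $$ (r div k, c div k)"
    unfolding ext_id_def Y_def using r c by simp
  also have "\<dots> = (\<Sum>n<d. sK (r div k) n * Y $$ (\<sigma> (r div k) n, \<sigma> (c div k) n) * cnj (sK (c div k) n))"
    by (rule phi_entry[OF Y a b])
  also have "\<dots> = (\<Sum>n<d. (Wk k n * X * mat_adjoint (Wk k n)) $$ (r,c))"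
  proof (rule sum.cong, simp)
    fix n assume n: "n \<in> {..<d}"
    have g: "\<And>r. r < d*k \<Longrightarrow> \<sigma> (r div k) n * k + r mod k < d*k"
      using n k by (intro idx_lt sig_lt) (auto simp: less_mult_imp_div_less)
    have W: "Wk k n \<in> carrier_mat (d*k) (d*k)" unfolding Wk_def by simp
    show "sK (r div k) n * Y $$ (\<sigma> (r div k) n, \<sigma> (c div k) n) * cnj (sK (c div k) n) =
      (Wk k n * X * mat_adjoint (Wk k n)) $$ (r,c)"
      using sig_lt[OF a, of n] sig_lt[OF b, of n] n
      by (subst sel_mult[OF W X _ g r c, where w = "\<lambda>r. sK (r div k) n"], auto simp: Wk_def Y_def sK_real)
  qed
  also have "\<dots> = msum (d*k) (\<lambda>n. Wk k n * X * mat_adjoint (Wk k n)) d $$ (r,c)"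
    unfolding msum_def using r c by simp
  finally show "ext_id \<Phi> d k X $$ (r,c) = msum (d*k) (\<lambda>n. Wk k n * X * mat_adjoint (Wk k n)) d $$ (r,c)" .
qed (auto simp: ext_id_def msum_def)

lemma cp: assumes X: "psd (d*k) X" shows "psd (d*k) (ext_id \<Phi> d k X)"
proof -
  have cX: "X \<in> carrier_mat (d*k) (d*k)" using X unfolding psd_def by auto
  show ?thesis unfolding ext_msum[OF cX]
  proof (rule msum_induct)
    show "psd (d*k) (0\<^sub>m (d*k) (d*k))" by (rule psd_zero)
    fix A n assume "psd (d*k) A"
    moreover have "psd (d*k) (Wk k n * X * mat_adjoint (Wk k n))"
      by (rule psd_congr[OF X], simp add: Wk_def)
    ultimately show "psd (d*k) (A + Wk k n * X * mat_adjoint (Wk k n))" by (rule psd_add)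
  next
    fix n show "Wk k n * X * mat_adjoint (Wk k n) \<in> carrier_mat (d*k) (d*k)"
      using cX adj_carrier[of "Wk k n" "d*k" "d*k"] by (auto simp: Wk_def)
  qed
qed

lemma channel: "is_channel d \<Phi>"
  unfolding is_channel_def using phi_carrier phi_add phi_smult phi_trace cp by blast

end



lemma row_desc_nth:
  assumes p: "\<sigma>i permutes {..<d}" and ord: "\<forall>m<d. \<forall>n<d. m \<le> n \<longrightarrow> f (\<sigma>i m) \<ge> f (\<sigma>i n)"
    and n: "n < d"
  shows "rev (sort (map f [0..<d])) ! n = f (\<sigma>i n)"
proof -
  define ys where "ys = map (\<lambda>n. f (\<sigma>i n)) [0..<d]"
  have ms: "mset (map \<sigma>i [0..<d]) = mset [0..<d]"
  proof -
    have inj: "inj_on \<sigma>i {0..<d}" using permutes_inj[OF p] by (auto intro: inj_on_subset)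
    have im: "\<sigma>i ` {0..<d} = {0..<d}" using permutes_image[OF p] by (simp add: lessThan_atLeast0)
    show ?thesis by (simp add: image_mset_mset_set[OF inj] im)
  qed
  have e1: "mset (map f [0..<d]) = image_mset f (mset [0..<d])" by (rule mset_map)
  have e2: "mset ys = image_mset f (mset (map \<sigma>i [0..<d]))" unfolding ys_def
    by (simp only: mset_map[symmetric] map_map comp_def)
  have "mset (rev ys) = mset (map f [0..<d])"
    unfolding mset_rev e1 e2 ms ..
  moreover have "sorted (rev ys)"
    unfolding sorted_rev_iff_nth_mono ys_def using ord by auto
  ultimately have "sort (map f [0..<d]) = rev ys" by (rule properties_for_sort)
  then show ?thesis using n by (simp add: ys_def)
qed

context KS begin

definition V :: "complex mat" where
  "V = mat (d*d) d (\<lambda>(r,n). if \<sigma> (r div d) n = r mod d then sK (r div d) n else 0)"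

definition Am :: "complex mat" where "Am = (1 / of_nat d) \<cdot>\<^sub>m V"
definition Bm :: "complex mat" where "Bm = mat_adjoint V"

lemma V_carrier: "V \<in> carrier_mat (d*d) d" unfolding V_def by simp
lemma Am_carrier: "Am \<in> carrier_mat (d*d) d" unfolding Am_def V_def by simp
lemma Bm_carrier: "Bm \<in> carrier_mat d (d*d)" unfolding Bm_def using adj_carrier[OF V_carrier] .

lemma V_entry: "a < d \<Longrightarrow> p < d \<Longrightarrow> n < d \<Longrightarrow> V $$ (a*d+p, n) = (if \<sigma> a n = p then sK a n else 0)"
  unfolding V_def using idx_lt[of a d p d] by simp

lemma J_eq: "jamiolkowski d \<Phi> = Am * Bm"
proof (rule eq_matI)
  fix r c assume r: "r < dim_row (Am * Bm)" and c: "c < dim_col (Am * Bm)"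
  have r: "r < d*d" and c: "c < d*d" using r c Am_carrier Bm_carrier by auto
  have d0: "d > 0" using d1 by simp
  have a: "r div d < d" and b: "c div d < d" using r c by (auto simp: less_mult_imp_div_less)
  have p: "r mod d < d" and q: "c mod d < d" using d0 by auto
  define Y where "Y = mat d d (\<lambda>(i,j). omega_proj d $$ (i*d + r mod d, j*d + c mod d))"
  have Y: "Y \<in> carrier_mat d d" unfolding Y_def by simp
  have Yi: "Y $$ (i,j) = (if i = r mod d \<and> j = c mod d then 1 else 0)" if "i < d" "j < d" for i j
    unfolding Y_def omega_proj_def using that p q idx_lt[of i d _ d] idx_lt[of j d _ d] by simp
  have "jamiolkowski d \<Phi> $$ (r,c) = (1 / of_nat d) * \<Phi> Y $$ (r div d, c div d)"
    unfolding jamiolkowski_def ext_id_def Y_def using r c by simp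
  also have "\<dots> = (1 / of_nat d) * (\<Sum>n<d. sK (r div d) n * cnj (sK (c div d) n) * Y $$ (\<sigma> (r div d) n, \<sigma> (c div d) n))"
    by (simp add: phi_entry2[OF Y a b])
  also have "\<dots> = (\<Sum>n<d. Am $$ (r,n) * Bm $$ (n,c))"
    unfolding sum_distrib_left
  proof (rule sum.cong, simp)
    fix n assume n: "n \<in> {..<d}"
    have r': "r = (r div d) * d + r mod d" and c': "c = (c div d) * d + c mod d" by simp_all
    have "V $$ (r, n) = (if \<sigma> (r div d) n = r mod d then sK (r div d) n else 0)"
      using V_entry[OF a p, of n] n r' by simp
    moreover have "V $$ (c, n) = (if \<sigma> (c div d) n = c mod d then sK (c div d) n else 0)"
      using V_entry[OF b q, of n] n c' by simp
    ultimately show "1 / of_nat d * (sK (r div d) n * cnj (sK (c div d) n) * Y $$ (\<sigma> (r div d) n, \<sigma> (c div d) n))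
      = Am $$ (r, n) * Bm $$ (n, c)"
      unfolding Am_def Bm_def using n r c V_carrier sig_lt[OF a, of n] sig_lt[OF b, of n]
      by (auto simp: Yi)
  qed
  also have "\<dots> = (Am * Bm) $$ (r,c)" by (rule mult_entry[symmetric, OF Am_carrier Bm_carrier r c])
  finally show "jamiolkowski d \<Phi> $$ (r,c) = (Am * Bm) $$ (r,c)" .
qed (insert Am_carrier Bm_carrier, auto simp: jamiolkowski_def ext_id_def)

end



lemma rank_msum:
  assumes "\<And>n. n < m \<Longrightarrow> F n \<in> carrier_mat N N" "\<And>n. n < m \<Longrightarrow> vec_space.rank N (F n) \<le> 1"
  shows "vec_space.rank N (msum N F m) \<le> m"
  using assms
proof (induction m)
  case 0 then show ?case by (simp add: msum_0 vec_space.rank_0I)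
next
  case (Suc m)
  have c: "msum N F m \<in> carrier_mat N N" unfolding msum_def by simp
  have "vec_space.rank N (msum N F (Suc m)) = vec_space.rank N (msum N F m + F m)"
    using Suc.prems by (simp add: msum_Suc)
  also have "\<dots> \<le> vec_space.rank N (msum N F m) + vec_space.rank N (F m)"
    by (rule vec_space.rank_subadditive[OF c], insert Suc.prems, auto)
  also have "\<dots> \<le> m + 1" using Suc by (intro add_mono) auto
  finally show ?case by simp
qed

context KS begin

lemma BA_entry:
  assumes n: "n < d" and m: "m < d"
  shows "(Bm * Am) $$ (n,m) = (if n = m then complex_of_real ((1 / real d) * (\<Sum>a<d. T a (\<sigma> a n))) else 0)"
proof -
  have "(Bm * Am) $$ (n,m) = (\<Sum>r<d*d. Bm $$ (n,r) * Am $$ (r,m))"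
    by (rule mult_entry[OF Bm_carrier Am_carrier n m])
  also have "\<dots> = (\<Sum>a<d. \<Sum>p<d. Bm $$ (n,a*d+p) * Am $$ (a*d+p,m))"
    by (rule sum_sq_split)
  also have "\<dots> = (\<Sum>a<d. if n = m then (1 / of_nat d) * complex_of_real (T a (\<sigma> a n)) else 0)"
  proof (rule sum.cong, simp)
    fix a assume a: "a \<in> {..<d}"
    have "(\<Sum>p<d. Bm $$ (n,a*d+p) * Am $$ (a*d+p,m))
        = (\<Sum>p<d. if p = \<sigma> a n then cnj (sK a n) * ((1 / of_nat d) * (if \<sigma> a m = p then sK a m else 0)) else 0)"
      unfolding Bm_def Am_def using a n m V_carrier idx_lt[of a d _ d]
      by (intro sum.cong) (auto simp: V_entry)
    also have "\<dots> = cnj (sK a n) * ((1 / of_nat d) * (if \<sigma> a m = \<sigma> a n then sK a m else 0))"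
      using sig_lt[of a n] a n by simp
    also have "\<dots> = (if n = m then (1 / of_nat d) * complex_of_real (T a (\<sigma> a n)) else 0)"
      using sig_inj[of a m n] sK_sq[of a n] a n by (auto simp: ac_simps)
    finally show "(\<Sum>p<d. Bm $$ (n,a*d+p) * Am $$ (a*d+p,m)) = (if n = m then (1 / of_nat d) * complex_of_real (T a (\<sigma> a n)) else 0)" .
  qed
  also have "\<dots> = (if n = m then complex_of_real ((1 / real d) * (\<Sum>a<d. T a (\<sigma> a n))) else 0)"
    by (auto simp: sum_distrib_left)
  finally show ?thesis .
qed

lemma char_BA: "char_poly (Bm * Am) = (\<Prod>n<d. [: - complex_of_real ((1 / real d) * (\<Sum>a<d. T a (\<sigma> a n))), 1 :])"
proof -
  have c: "Bm * Am \<in> carrier_mat d d" using Bm_carrier Am_carrier by auto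
  have ut: "upper_triangular (Bm * Am)" unfolding upper_triangular_def using c BA_entry by auto
  show ?thesis
    unfolding char_poly_upper_triangular[OF c ut] diag_mat_def using c
    using Bm_carrier by (simp add: prod_list_upt, intro prod.cong, simp, simp add: BA_entry)
qed

lemma char_J: "char_poly (jamiolkowski d \<Phi>) = (\<Prod>n<d. [: - complex_of_real ((1 / real d) * (\<Sum>a<d. T a (\<sigma> a n))), 1 :]) * monom 1 (d * d - d)"
proof -
  have s: "monom 1 d * char_poly (Am * Bm) = monom 1 (d*d) * char_poly (Bm * Am)"
    by (rule sylvester[OF Am_carrier Bm_carrier])
  have dd: "d * d = d + (d * d - d)" using d1 by (cases d) auto
  have "monom (1::complex) (d*d) = monom 1 d * monom 1 (d*d - d)"
    by (subst dd, simp add: mult_monom)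
  then have "monom 1 d * char_poly (Am * Bm) = monom 1 d * (monom 1 (d*d - d) * char_poly (Bm * Am))"
    using s by (simp add: ac_simps)
  then have "char_poly (Am * Bm) = monom 1 (d*d - d) * char_poly (Bm * Am)" by simp
  then show ?thesis unfolding J_eq char_BA by (simp add: ac_simps)
qed

lemma rank_J: "vec_space.rank (d*d) (jamiolkowski d \<Phi>) \<le> d"
proof -
  define R where "R n = mat (d*d) (d*d) (\<lambda>(r,c). Am $$ (r,n) * Bm $$ (n,c))" for n
  have "jamiolkowski d \<Phi> = msum (d*d) R d"
    unfolding J_eq
  proof (rule eq_matI)
    fix i j assume "i < dim_row (msum (d*d) R d)" "j < dim_col (msum (d*d) R d)"
    then have i: "i < d*d" and j: "j < d*d" unfolding msum_def by auto
    show "(Am * Bm) $$ (i,j) = msum (d*d) R d $$ (i,j)"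
      by (subst mult_entry[OF Am_carrier Bm_carrier i j]) (simp add: msum_def R_def i j)
  qed (insert Am_carrier Bm_carrier, auto simp: msum_def)
  also have "vec_space.rank (d*d) (msum (d*d) R d) \<le> d"
  proof (rule rank_msum)
    fix n show "R n \<in> carrier_mat (d*d) (d*d)" unfolding R_def by simp
    show "vec_space.rank (d*d) (R n) \<le> 1"
      by (rule vec_space.rank_le_1_product_entries[where f = "\<lambda>r. Am $$ (r,n)" and g = "\<lambda>c. Bm $$ (n,c)" and nc = "d*d"],
          auto simp: R_def)
  qed
  finally show ?thesis .
qed

end


theorem mainTheorem4:
  fixes d :: nat and T :: "nat \<Rightarrow> nat \<Rightarrow> real" and \<sigma> :: "nat \<Rightarrow> nat \<Rightarrow> nat"
  assumes "d \<ge> 1"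
    and "column_stochastic d T"
    and "\<forall>i<d. \<sigma> i permutes {..<d}"
    and "\<forall>i<d. \<forall>m<d. \<forall>n<d. m \<le> n \<longrightarrow> T i (\<sigma> i m) \<ge> T i (\<sigma> i n)"
  shows "is_channel d (kraus_channel d (kraus_op d T \<sigma>))
    \<and> (\<forall>i<d. \<forall>j<d. classical_action d (kraus_channel d (kraus_op d T \<sigma>)) i j = complex_of_real (T i j))
    \<and> char_poly (jamiolkowski d (kraus_channel d (kraus_op d T \<sigma>)))
        = (\<Prod>n<d. [: - complex_of_real ((1 / real d) * (\<Sum>i<d. row_desc d T i ! n)), 1 :])
          * monom 1 (d * d - d)
    \<and> vec_space.rank (d * d) (jamiolkowski d (kraus_channel d (kraus_op d T \<sigma>))) \<le> d"
proof -
  interpret KS d T \<sigma> using assms(1-3) by unfold_locales auto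
  have rd: "(\<Sum>i<d. row_desc d T i ! n) = (\<Sum>a<d. T a (\<sigma> a n))" if n: "n < d" for n
    unfolding row_desc_def
    by (rule sum.cong, simp, rule row_desc_nth, insert assms(3,4) n, auto)
  have ch: "char_poly (jamiolkowski d (kraus_channel d (kraus_op d T \<sigma>)))
        = (\<Prod>n<d. [: - complex_of_real ((1 / real d) * (\<Sum>i<d. row_desc d T i ! n)), 1 :])
          * monom 1 (d * d - d)"
    unfolding char_J by (simp add: rd)
  show ?thesis using channel classical ch rank_J by auto
qed

end
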